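(* Let $F$ be a field of characteristic two and let $(A,\sigma)$ be a central simple $F$-algebra with orthogonal involution. If $(A,\sigma)\otimes(M_2(F),\tau)\simeq(M_{2^n}(F),t)$ for some orthogonal involution $\tau$ on $M_2(F)$, then $(A,\sigma)\simeq(M_{2^{n-1}}(F),t)$.
   Context: Involutions are of the first kind; $t$ denotes the transpose involution; $\simeq$ is isomorphism of algebras with involution. *)

theory Defs
  imports Main "Jordan_Normal_Form.Matrix"
begin

definition F_algebra :: "('f::field \<Rightarrow> 'a::ring_1 \<Rightarrow> 'a) \<Rightarrow> bool" where
  "F_algebra sm \<longleftrightarrow>
     (\<forall>c x y. sm c (x + y) = sm c x + sm c y) \<and>
     (\<forall>c d x. sm (c + d) x = sm c x + sm d x) \<and>
     (\<forall>c d x. sm (c * d) x = sm c (sm d x)) \<and>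
     (\<forall>x. sm 1 x = x) \<and>
     (\<forall>c x y. sm c (x * y) = sm c x * y \<and> sm c (x * y) = x * sm c y)"

definition finite_dimensional_alg :: "('f::field \<Rightarrow> 'a::ring_1 \<Rightarrow> 'a) \<Rightarrow> bool" where
  "finite_dimensional_alg sm \<longleftrightarrow>
     (\<exists>B. finite B \<and> (\<forall>x. \<exists>f. x = (\<Sum>b\<in>B. sm (f b) b)))"

definition central_alg :: "('f::field \<Rightarrow> 'a::ring_1 \<Rightarrow> 'a) \<Rightarrow> bool" where
  "central_alg sm \<longleftrightarrow> (\<forall>z. (\<forall>x. z * x = x * z) \<longrightarrow> (\<exists>c. z = sm c 1))"

definition two_sided_ideal :: "'a::ring_1 set \<Rightarrow> bool" where
  "two_sided_ideal I \<longleftrightarrow> 0 \<in> I \<and> (\<forall>x\<in>I. \<forall>y\<in>I. x + y \<in> I) \<and>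
     (\<forall>x\<in>I. \<forall>a. a * x \<in> I \<and> x * a \<in> I)"

definition simple_ring :: "'a::ring_1 itself \<Rightarrow> bool" where
  "simple_ring _ \<longleftrightarrow> (0::'a) \<noteq> 1 \<and>
     (\<forall>I::'a set. two_sided_ideal I \<longrightarrow> I = {0} \<or> I = UNIV)"

definition central_simple_algebra :: "('f::field \<Rightarrow> 'a::ring_1 \<Rightarrow> 'a) \<Rightarrow> bool" where
  "central_simple_algebra sm \<longleftrightarrow> F_algebra sm \<and> finite_dimensional_alg sm \<and>
     central_alg sm \<and> simple_ring TYPE('a)"

definition involution_first_kind :: "('f::field \<Rightarrow> 'a::ring_1 \<Rightarrow> 'a) \<Rightarrow> ('a \<Rightarrow> 'a) \<Rightarrow> bool" where
  "involution_first_kind sm \<sigma> \<longleftrightarrow>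
     (\<forall>x y. \<sigma> (x + y) = \<sigma> x + \<sigma> y) \<and>
     (\<forall>x y. \<sigma> (x * y) = \<sigma> y * \<sigma> x) \<and>
     (\<forall>x. \<sigma> (\<sigma> x) = x) \<and>
     (\<forall>c x. \<sigma> (sm c x) = sm c (\<sigma> x))"

text \<open>Characteristic two: orthogonal iff 1 is not in Symd = {x + sigma x} (KMRT 2.6).\<close>
definition orthogonal_involution :: "('f::field \<Rightarrow> 'a::ring_1 \<Rightarrow> 'a) \<Rightarrow> ('a \<Rightarrow> 'a) \<Rightarrow> bool" where
  "orthogonal_involution sm \<sigma> \<longleftrightarrow> involution_first_kind sm \<sigma> \<and> (\<forall>x. x + \<sigma> x \<noteq> 1)"

definition mat_orthogonal_involution :: "nat \<Rightarrow> ('f::field mat \<Rightarrow> 'f mat) \<Rightarrow> bool" where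
  "mat_orthogonal_involution m \<tau> \<longleftrightarrow>
     (\<forall>x\<in>carrier_mat m m. \<tau> x \<in> carrier_mat m m) \<and>
     (\<forall>x\<in>carrier_mat m m. \<forall>y\<in>carrier_mat m m. \<tau> (x + y) = \<tau> x + \<tau> y) \<and>
     (\<forall>x\<in>carrier_mat m m. \<forall>y\<in>carrier_mat m m. \<tau> (x * y) = \<tau> y * \<tau> x) \<and>
     (\<forall>x\<in>carrier_mat m m. \<tau> (\<tau> x) = x) \<and>
     (\<forall>c. \<forall>x\<in>carrier_mat m m. \<tau> (c \<cdot>\<^sub>m x) = c \<cdot>\<^sub>m \<tau> x) \<and>
     (\<forall>x\<in>carrier_mat m m. x + \<tau> x \<noteq> 1\<^sub>m m)"

definition unit2 :: "nat \<Rightarrow> nat \<Rightarrow> 'f::field mat" where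
  "unit2 i j = mat 2 2 (\<lambda>(k, l). if k = i \<and> l = j then 1 else 0)"

text \<open>A \<otimes>_F M_2(F) is identified with M_2(A) via a \<otimes> m \<mapsto> (m_kl a)_kl;
  the involution sigma \<otimes> tau then sends X = sum X_ij \<otimes> e_ij to
  sum sigma(X_ij) \<otimes> tau(e_ij).\<close>
definition tensor_M2_inv ::
  "('f::field \<Rightarrow> 'a::ring_1 \<Rightarrow> 'a) \<Rightarrow> ('a \<Rightarrow> 'a) \<Rightarrow> ('f mat \<Rightarrow> 'f mat) \<Rightarrow> 'a mat \<Rightarrow> 'a mat" where
  "tensor_M2_inv sm \<sigma> \<tau> X =
     mat 2 2 (\<lambda>(k, l). \<Sum>i<2. \<Sum>j<2. sm ((\<tau> (unit2 i j)) $$ (k, l)) (\<sigma> (X $$ (i, j))))"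

definition alg_inv_iso ::
  "'a set \<Rightarrow> ('a \<Rightarrow> 'a \<Rightarrow> 'a) \<Rightarrow> ('a \<Rightarrow> 'a \<Rightarrow> 'a) \<Rightarrow> ('f \<Rightarrow> 'a \<Rightarrow> 'a) \<Rightarrow> ('a \<Rightarrow> 'a) \<Rightarrow>
   'b set \<Rightarrow> ('b \<Rightarrow> 'b \<Rightarrow> 'b) \<Rightarrow> ('b \<Rightarrow> 'b \<Rightarrow> 'b) \<Rightarrow> ('f \<Rightarrow> 'b \<Rightarrow> 'b) \<Rightarrow> ('b \<Rightarrow> 'b) \<Rightarrow> bool" where
  "alg_inv_iso S1 p1 t1 s1 i1 S2 p2 t2 s2 i2 \<longleftrightarrow>
     (\<exists>\<phi>. bij_betw \<phi> S1 S2 \<and>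
        (\<forall>x\<in>S1. \<forall>y\<in>S1. \<phi> (p1 x y) = p2 (\<phi> x) (\<phi> y) \<and> \<phi> (t1 x y) = t2 (\<phi> x) (\<phi> y)) \<and>
        (\<forall>c. \<forall>x\<in>S1. \<phi> (s1 c x) = s2 c (\<phi> x)) \<and>
        (\<forall>x\<in>S1. \<phi> (i1 x) = i2 (\<phi> x)))"

end

theory Submission
  imports Defs "Jordan_Normal_Form.Determinant"
begin


lemma mult_entry:
  assumes "X \<in> carrier_mat nr n" "Y \<in> carrier_mat n nc" "i < nr" "j < nc"
  shows "(X * Y) $$ (i,j) = (\<Sum>k\<in>{0..<n}. X $$ (i,k) * Y $$ (k,j))"
  using assms by (auto simp: scalar_prod_def intro!: sum.cong)

lemma char2_two: assumes "CHAR('f::field) = 2" shows "(2::'f) = 0"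
  using of_nat_CHAR[where 'a='f] assms by simp

lemma char2_neg: assumes "CHAR('f::field) = 2" shows "- (x::'f) = x"
proof -
  have "x + x = 2 * x" by simp
  also have "\<dots> = 0" using char2_two[OF assms] by simp
  finally show ?thesis by (simp add: add_eq_0_iff2)
qed

lemma det_zero_last_row:
  assumes A: "A \<in> carrier_mat a a" and k: "k < a" and z: "\<And>j. j < a \<Longrightarrow> A $$ (k, j) = 0"
  shows "det (A::'f::field mat) = 0"
proof -
  have "A = mat\<^sub>r a a (\<lambda>i. if i = k then 0\<^sub>v a else row A i)"
    by (rule eq_matI, insert A z, auto)
  also have "det \<dots> = 0" by (rule det_row_0[OF k], insert A, auto)
  finally show ?thesis .
qed

lemma dim_le:
  fixes A B :: "'f::field mat"
  assumes A: "A \<in> carrier_mat b a" and B: "B \<in> carrier_mat a b" and BA: "B * A = 1\<^sub>m a"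
  shows "a \<le> b"
proof (rule ccontr)
  assume "\<not> a \<le> b" hence ba: "b < a" by simp
  define A' where "A' = mat a a (\<lambda>(i,j). if i < b then A $$ (i,j) else 0)"
  define B' where "B' = mat a a (\<lambda>(i,j). if j < b then B $$ (i,j) else 0)"
  have cA: "A' \<in> carrier_mat a a" and cB: "B' \<in> carrier_mat a a" unfolding A'_def B'_def by auto
  have "B' * A' = B * A"
  proof (rule eq_matI)
    fix i j assume i: "i < dim_row (B * A)" and j: "j < dim_col (B * A)"
    have "(B' * A') $$ (i,j) = (\<Sum>k\<in>{0..<a}. B' $$ (i,k) * A' $$ (k,j))"
      by (rule mult_entry[OF cB cA], insert i j A B ba, auto)
    also have "\<dots> = (\<Sum>k\<in>{0..<b}. B' $$ (i,k) * A' $$ (k,j))"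
      by (rule sum.mono_neutral_right, insert ba i j A B, auto simp: A'_def B'_def)
    also have "\<dots> = (\<Sum>k\<in>{0..<b}. B $$ (i,k) * A $$ (k,j))"
      by (rule sum.cong, insert ba i j A B, auto simp: A'_def B'_def)
    also have "\<dots> = (B * A) $$ (i,j)" by (rule mult_entry[symmetric, OF B A], insert i j A B, auto)
    finally show "(B' * A') $$ (i,j) = (B * A) $$ (i,j)" .
  qed (insert A B cA cB, auto)
  hence "det (B' * A') = 1" using BA by simp
  moreover have "det A' = 0"
    by (rule det_zero_last_row[OF cA, of b], insert ba, auto simp: A'_def)
  ultimately show False using det_mult[OF cB cA] by simp
qed


definition ones :: "nat \<Rightarrow> 'f::field mat" where "ones N = mat N 1 (\<lambda>_. 1)"

lemma sq_sum_char2: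
  assumes ch: "CHAR('f::field) = 2" and fin: "finite S"
  shows "(\<Sum>i\<in>S. (g i::'f) * g i) = (\<Sum>i\<in>S. g i) * (\<Sum>i\<in>S. g i)"
  using fin
proof (induction S rule: finite_induct)
  case (insert a S)
  have t: "(2::'f) = 0" by (rule char2_two[OF ch])
  have "(g a + sum g S) * (g a + sum g S) = g a * g a + sum g S * sum g S + 2 * (g a * sum g S)"
    by (simp add: algebra_simps)
  with insert t show ?case by simp
qed simp

lemma sum4:
  "(\<Sum>m\<in>S. (a m - x * b m) * (c m - d m * (y::'f::field))) =
    (\<Sum>m\<in>S. a m * c m) - x * (\<Sum>m\<in>S. b m * c m) - (\<Sum>m\<in>S. a m * d m) * y + x * y * (\<Sum>m\<in>S. b m * d m)"
  by (simp add: algebra_simps sum.distrib sum_subtractf sum_distrib_left sum_distrib_right)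

lemma sum2:
  "(\<Sum>m\<in>S. (a m - x * b m) * (c m::'f::field)) = (\<Sum>m\<in>S. a m * c m) - x * (\<Sum>m\<in>S. b m * c m)"
  by (simp add: algebra_simps sum.distrib sum_subtractf sum_distrib_left sum_distrib_right)

lemma orth_step:
  fixes P :: "'f::field mat"
  assumes ch: "CHAR('f) = 2" and P: "P \<in> carrier_mat N N"
    and sym: "\<And>i j. i < N \<Longrightarrow> j < N \<Longrightarrow> P $$ (j,i) = P $$ (i,j)"
    and idem: "\<And>i j. i < N \<Longrightarrow> j < N \<Longrightarrow> (\<Sum>m\<in>{0..<N}. P $$ (i,m) * P $$ (m,j)) = P $$ (i,j)"
    and nz: "\<exists>i<N. (\<Sum>j\<in>{0..<N}. P $$ (i,j)) \<noteq> 0"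
  shows "\<exists>w. (\<forall>i<N. (\<Sum>m\<in>{0..<N}. P $$ (i,m) * w m) = w i) \<and> (\<Sum>m\<in>{0..<N}. w m) = 1 \<and>
     ((\<forall>i<N. \<forall>j<N. P $$ (i,j) = w i * w j) \<or> (\<exists>i<N. (\<Sum>j\<in>{0..<N}. P $$ (i,j)) \<noteq> w i))"
proof -
  define u where "u i = (\<Sum>j\<in>{0..<N}. P $$ (i,j))" for i
  define L where "L = (\<Sum>i\<in>{0..<N}. u i)"
  have Pu: "(\<Sum>m\<in>{0..<N}. P $$ (i,m) * u m) = u i" if "i < N" for i
  proof -
    have "(\<Sum>m\<in>{0..<N}. P $$ (i,m) * u m) = (\<Sum>m\<in>{0..<N}. \<Sum>j\<in>{0..<N}. P $$ (i,m) * P $$ (m,j))"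
      unfolding u_def by (simp add: sum_distrib_left)
    also have "\<dots> = (\<Sum>j\<in>{0..<N}. \<Sum>m\<in>{0..<N}. P $$ (i,m) * P $$ (m,j))"
      by (rule sum.swap)
    also have "\<dots> = u i" unfolding u_def by (rule sum.cong, insert that idem, auto)
    finally show ?thesis .
  qed
  have colsum: "(\<Sum>m\<in>{0..<N}. P $$ (m,j)) = u j" if "j < N" for j
    unfolding u_def by (rule sum.cong, insert sym that, auto)
  have LL: "L * L = L"
  proof -
    have "L * L = (\<Sum>i\<in>{0..<N}. u i * u i)" unfolding L_def by (rule sq_sum_char2[OF ch, symmetric], simp)
    also have "\<dots> = (\<Sum>i\<in>{0..<N}. \<Sum>m\<in>{0..<N}. P $$ (m,i) * u i)"
      by (rule sum.cong, insert colsum, auto simp: sum_distrib_right[symmetric])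
    also have "\<dots> = (\<Sum>m\<in>{0..<N}. \<Sum>i\<in>{0..<N}. P $$ (m,i) * u i)" by (rule sum.swap)
    also have "\<dots> = L" unfolding L_def by (rule sum.cong, insert Pu, auto)
    finally show ?thesis .
  qed
  show ?thesis
  proof (cases "L = 0")
    case True
    from nz obtain i where i: "i < N" and ui: "u i \<noteq> 0" unfolding u_def by auto
    define w where "w k = P $$ (k,i) / u i" for k
    show ?thesis
    proof (intro exI[of _ w] conjI disjI2)
      show "\<forall>k<N. (\<Sum>m\<in>{0..<N}. P $$ (k,m) * w m) = w k"
        using idem i unfolding w_def by (auto simp: sum_divide_distrib[symmetric])
      show sw: "(\<Sum>m\<in>{0..<N}. w m) = 1"
        using colsum[OF i] ui unfolding w_def by (simp add: sum_divide_distrib[symmetric])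
      show "\<exists>k<N. (\<Sum>j\<in>{0..<N}. P $$ (k,j)) \<noteq> w k"
      proof (rule ccontr)
        assume "\<not> ?thesis"
        hence "\<forall>k<N. u k = w k" unfolding u_def by auto
        hence "L = (\<Sum>m\<in>{0..<N}. w m)" unfolding L_def by (auto intro: sum.cong)
        with sw True show False by simp
      qed
    qed
  next
    case False
    hence L1: "L = 1" using LL by (metis mult_cancel_right2)
    show ?thesis
    proof (cases "\<forall>i<N. \<forall>j<N. P $$ (i,j) = u i * u j")
      case True
      show ?thesis
        by (intro exI[of _ u] conjI disjI1, insert Pu L1 True, auto simp: L_def)
    next
      case False
      then obtain k j where k: "k < N" and j: "j < N" and ne: "P $$ (k,j) \<noteq> u k * u j" by auto
      define w where "w i = u i + P $$ (i,j) - u i * u j" for i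
      show ?thesis
      proof (intro exI[of _ w] conjI disjI2)
        show "\<forall>i<N. (\<Sum>m\<in>{0..<N}. P $$ (i,m) * w m) = w i"
        proof (intro allI impI)
          fix i assume i: "i < N"
          have "(\<Sum>m\<in>{0..<N}. P $$ (i,m) * w m) =
            (\<Sum>m\<in>{0..<N}. P $$ (i,m) * u m) + (\<Sum>m\<in>{0..<N}. P $$ (i,m) * P $$ (m,j))
             - (\<Sum>m\<in>{0..<N}. P $$ (i,m) * u m) * u j"
            unfolding w_def by (simp add: algebra_simps sum.distrib sum_subtractf sum_distrib_right sum_distrib_left)
          also have "\<dots> = w i" using Pu[OF i] idem[OF i j] unfolding w_def by simp
          finally show "(\<Sum>m\<in>{0..<N}. P $$ (i,m) * w m) = w i" .
        qed
        show "(\<Sum>m\<in>{0..<N}. w m) = 1"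
          unfolding w_def using colsum[OF j] L1 unfolding L_def
          by (simp add: sum.distrib sum_subtractf sum_distrib_right[symmetric])
        show "\<exists>i<N. (\<Sum>j\<in>{0..<N}. P $$ (i,j)) \<noteq> w i"
          by (intro exI[of _ k], insert k ne, auto simp: w_def u_def)
      qed
    qed
  qed
qed

definition symidem :: "nat \<Rightarrow> 'f::field mat \<Rightarrow> bool" where
  "symidem N P \<longleftrightarrow> P \<in> carrier_mat N N \<and> (\<forall>i<N. \<forall>j<N. P $$ (j,i) = P $$ (i,j)) \<and>
     (\<forall>i<N. \<forall>j<N. (\<Sum>m\<in>{0..<N}. P $$ (i,m) * P $$ (m,j)) = P $$ (i,j))"

definition good :: "nat \<Rightarrow> 'f::field mat \<Rightarrow> bool" where
  "good N P \<longleftrightarrow> (\<forall>i<N. \<forall>j<N. P $$ (i,j) = 0) \<or> (\<exists>i<N. (\<Sum>j\<in>{0..<N}. P $$ (i,j)) \<noteq> 0)"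

definition orthon :: "nat \<Rightarrow> nat \<Rightarrow> 'f::field mat \<Rightarrow> bool" where
  "orthon N k W \<longleftrightarrow> W \<in> carrier_mat N k \<and>
     (\<forall>a<k. \<forall>b<k. (\<Sum>i\<in>{0..<N}. W $$ (i,a) * W $$ (i,b)) = (if a = b then 1 else 0))"

lemma orthon_le: assumes "orthon N k W" shows "k \<le> N"
proof -
  from assms have W: "W \<in> carrier_mat N k" unfolding orthon_def by auto
  have "transpose_mat W * W = 1\<^sub>m k"
  proof (rule eq_matI)
    fix i j assume i: "i < dim_row (1\<^sub>m k :: 'a mat)" and j: "j < dim_col (1\<^sub>m k :: 'a mat)"
    have "(transpose_mat W * W) $$ (i,j) = (\<Sum>m\<in>{0..<N}. transpose_mat W $$ (i,m) * W $$ (m,j))"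
      by (rule mult_entry, insert i j W, auto)
    also have "\<dots> = (\<Sum>m\<in>{0..<N}. W $$ (m,i) * W $$ (m,j))" by (rule sum.cong, insert i j W, auto)
    finally show "(transpose_mat W * W) $$ (i,j) = 1\<^sub>m k $$ (i,j)" using assms i j unfolding orthon_def by auto
  qed (insert W, auto)
  from dim_le[OF W _ this] W show ?thesis by auto
qed

lemma orth_iter:
  fixes P :: "'f::field mat"
  assumes ch: "CHAR('f) = 2"
  shows "N - k = d \<Longrightarrow> symidem N P \<Longrightarrow> good N P \<Longrightarrow> orthon N k W \<Longrightarrow>
    (\<forall>i<N. \<forall>a<k. (\<Sum>m\<in>{0..<N}. P $$ (i,m) * W $$ (m,a)) = 0) \<Longrightarrow>
    \<exists>r Q. orthon N r Q \<and> (\<forall>i<N. \<forall>j<N. (\<Sum>a\<in>{0..<r}. Q $$ (i,a) * Q $$ (j,a)) =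
        (\<Sum>a\<in>{0..<k}. W $$ (i,a) * W $$ (j,a)) + P $$ (i,j))"
proof (induction d arbitrary: k W P rule: less_induct)
  case (less d)
  note SI = less.prems(2)[unfolded symidem_def]
  have P: "P \<in> carrier_mat N N" and sym: "\<And>i j. i < N \<Longrightarrow> j < N \<Longrightarrow> P $$ (j,i) = P $$ (i,j)"
    and idem: "\<And>i j. i < N \<Longrightarrow> j < N \<Longrightarrow> (\<Sum>m\<in>{0..<N}. P $$ (i,m) * P $$ (m,j)) = P $$ (i,j)"
    using SI by auto
  have W: "W \<in> carrier_mat N k" and Won: "\<And>a b. a < k \<Longrightarrow> b < k \<Longrightarrow> (\<Sum>i\<in>{0..<N}. W $$ (i,a) * W $$ (i,b)) = (if a = b then 1 else 0)"
    using less.prems(4) unfolding orthon_def by auto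
  have PW: "\<And>i a. i < N \<Longrightarrow> a < k \<Longrightarrow> (\<Sum>m\<in>{0..<N}. P $$ (i,m) * W $$ (m,a)) = 0" using less.prems(5) by auto
  show ?case
  proof (cases "\<forall>i<N. \<forall>j<N. P $$ (i,j) = 0")
    case True
    show ?thesis by (intro exI[of _ k] exI[of _ W] conjI, rule less.prems(4), insert True, auto)
  next
    case False
    hence nz: "\<exists>i<N. (\<Sum>j\<in>{0..<N}. P $$ (i,j)) \<noteq> 0" using less.prems(3) unfolding good_def by auto
    from orth_step[OF ch P sym idem nz] obtain w where
      Pw: "\<And>i. i < N \<Longrightarrow> (\<Sum>m\<in>{0..<N}. P $$ (i,m) * w m) = w i" and sw: "(\<Sum>m\<in>{0..<N}. w m) = 1"
      and alt: "(\<forall>i<N. \<forall>j<N. P $$ (i,j) = w i * w j) \<or> (\<exists>i<N. (\<Sum>j\<in>{0..<N}. P $$ (i,j)) \<noteq> w i)"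
      by blast
    have ww: "(\<Sum>m\<in>{0..<N}. w m * w m) = 1" using sq_sum_char2[OF ch, of "{0..<N}" w] sw by simp
    have wP: "(\<Sum>m\<in>{0..<N}. w m * P $$ (m,j)) = w j" if "j < N" for j
      using Pw[OF that] by (auto intro!: sum.cong simp: sym that mult.commute[of "w _"] elim!: subst[rotated])
    have Ww: "(\<Sum>i\<in>{0..<N}. W $$ (i,a) * w i) = 0" if a: "a < k" for a
    proof -
      have "(\<Sum>i\<in>{0..<N}. W $$ (i,a) * w i) = (\<Sum>i\<in>{0..<N}. \<Sum>m\<in>{0..<N}. W $$ (i,a) * (P $$ (m,i) * w m))"
        by (rule sum.cong, auto simp: Pw sym sum_distrib_left[symmetric])
      also have "\<dots> = (\<Sum>m\<in>{0..<N}. \<Sum>i\<in>{0..<N}. W $$ (i,a) * (P $$ (m,i) * w m))" by (rule sum.swap)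
      also have "\<dots> = (\<Sum>m\<in>{0..<N}. (\<Sum>i\<in>{0..<N}. P $$ (m,i) * W $$ (i,a)) * w m)"
        by (rule sum.cong, auto simp: sum_distrib_right sum_distrib_left ac_simps)
      also have "\<dots> = 0" using PW a by simp
      finally show ?thesis .
    qed
    define W' where "W' = mat N (Suc k) (\<lambda>(i,a). if a < k then W $$ (i,a) else w i)"
    define P' where "P' = mat N N (\<lambda>(i,j). P $$ (i,j) - w i * w j)"
    have W'c: "W' \<in> carrier_mat N (Suc k)" unfolding W'_def by simp
    have on': "orthon N (Suc k) W'"
      unfolding orthon_def
    proof (intro conjI allI impI, rule W'c)
      fix a b assume a: "a < Suc k" and b: "b < Suc k"
      show "(\<Sum>i\<in>{0..<N}. W' $$ (i,a) * W' $$ (i,b)) = (if a = b then 1 else 0)"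
      proof (cases "a < k")
        case ak: True
        show ?thesis
        proof (cases "b < k")
          case True thus ?thesis using ak Won[OF ak True] unfolding W'_def by (auto intro!: sum.cong)
        next
          case False hence "b = k" using b by simp
          thus ?thesis using ak Ww[OF ak] unfolding W'_def by (auto intro!: sum.cong)
        qed
      next
        case False hence ak: "a = k" using a by simp
        show ?thesis
        proof (cases "b < k")
          case True
          have "(\<Sum>i\<in>{0..<N}. W' $$ (i,a) * W' $$ (i,b)) = (\<Sum>i\<in>{0..<N}. W $$ (i,b) * w i)"
            using ak True unfolding W'_def by (auto intro!: sum.cong simp: mult.commute)
          thus ?thesis using Ww[OF True] ak True by simp
        next
          case False hence "b = k" using b by simp
          thus ?thesis using ak ww unfolding W'_def by (auto intro!: sum.cong)
        qed
      qed
    qed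
    have kN: "Suc k \<le> N" by (rule orthon_le[OF on'])
    have si': "symidem N P'"
      unfolding symidem_def
    proof (intro conjI allI impI)
      show "P' \<in> carrier_mat N N" unfolding P'_def by simp
      fix i j assume i: "i < N" and j: "j < N"
      show "P' $$ (j,i) = P' $$ (i,j)" using i j sym unfolding P'_def by auto
      have "(\<Sum>m\<in>{0..<N}. P' $$ (i,m) * P' $$ (m,j)) =
        (\<Sum>m\<in>{0..<N}. (P $$ (i,m) - w i * w m) * (P $$ (m,j) - w m * w j))"
        using i j unfolding P'_def by (auto intro!: sum.cong)
      also have "\<dots> = P $$ (i,j) - w i * w j - w i * w j + w i * w j"
        unfolding sum4 using idem[OF i j] wP[OF j] Pw[OF i] ww by simp
      also have "\<dots> = P' $$ (i,j)" using i j unfolding P'_def by simp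
      finally show "(\<Sum>m\<in>{0..<N}. P' $$ (i,m) * P' $$ (m,j)) = P' $$ (i,j)" .
    qed
    have good': "good N P'"
      unfolding good_def
    proof (rule disjCI)
      assume "\<not> (\<exists>i<N. (\<Sum>j\<in>{0..<N}. P' $$ (i,j)) \<noteq> 0)"
      hence z: "\<And>i. i < N \<Longrightarrow> (\<Sum>j\<in>{0..<N}. P $$ (i,j) - w i * w j) = 0" unfolding P'_def
        by (auto elim!: subst[rotated] intro!: sum.cong)
      have "\<not> (\<exists>i<N. (\<Sum>j\<in>{0..<N}. P $$ (i,j)) \<noteq> w i)"
      proof
        assume "\<exists>i<N. (\<Sum>j\<in>{0..<N}. P $$ (i,j)) \<noteq> w i"
        then obtain i where i: "i < N" and ne: "(\<Sum>j\<in>{0..<N}. P $$ (i,j)) \<noteq> w i" by auto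
        have "(\<Sum>j\<in>{0..<N}. P $$ (i,j) - w i * w j) = (\<Sum>j\<in>{0..<N}. P $$ (i,j)) - w i"
          using sw by (simp add: sum_subtractf sum_distrib_left[symmetric])
        with z[OF i] ne show False by simp
      qed
      with alt show "\<forall>i<N. \<forall>j<N. P' $$ (i,j) = 0" unfolding P'_def by auto
    qed
    have PW': "\<forall>i<N. \<forall>a<Suc k. (\<Sum>m\<in>{0..<N}. P' $$ (i,m) * W' $$ (m,a)) = 0"
    proof (intro allI impI)
      fix i a assume i: "i < N" and a: "a < Suc k"
      have "(\<Sum>m\<in>{0..<N}. P' $$ (i,m) * W' $$ (m,a)) = (\<Sum>m\<in>{0..<N}. (P $$ (i,m) - w i * w m) * W' $$ (m,a))"
        using i unfolding P'_def by (auto intro!: sum.cong)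
      also have "\<dots> = (\<Sum>m\<in>{0..<N}. P $$ (i,m) * W' $$ (m,a)) - w i * (\<Sum>m\<in>{0..<N}. w m * W' $$ (m,a))"
        by (rule sum2)
      also have "\<dots> = 0"
      proof (cases "a < k")
        case True
        have "(\<Sum>m\<in>{0..<N}. w m * W' $$ (m,a)) = (\<Sum>m\<in>{0..<N}. W $$ (m,a) * w m)"
          using True unfolding W'_def by (auto intro!: sum.cong simp: mult.commute)
        moreover have "(\<Sum>m\<in>{0..<N}. P $$ (i,m) * W' $$ (m,a)) = (\<Sum>m\<in>{0..<N}. P $$ (i,m) * W $$ (m,a))"
          using True unfolding W'_def by (auto intro!: sum.cong)
        ultimately show ?thesis using Ww[OF True] PW[OF i True] by simp
      next
        case False hence "a = k" using a by simp
        hence "(\<Sum>m\<in>{0..<N}. w m * W' $$ (m,a)) = (\<Sum>m\<in>{0..<N}. w m * w m)"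
          and "(\<Sum>m\<in>{0..<N}. P $$ (i,m) * W' $$ (m,a)) = (\<Sum>m\<in>{0..<N}. P $$ (i,m) * w m)"
          unfolding W'_def by (auto intro!: sum.cong)
        thus ?thesis using ww Pw[OF i] by simp
      qed
      finally show "(\<Sum>m\<in>{0..<N}. P' $$ (i,m) * W' $$ (m,a)) = 0" .
    qed
    have lt: "N - Suc k < d" using kN less.prems(1) by simp
    from less.IH[OF lt refl si' good' on' PW'] obtain r Q where
      Q: "orthon N r Q" and QQ: "\<forall>i<N. \<forall>j<N. (\<Sum>a\<in>{0..<r}. Q $$ (i,a) * Q $$ (j,a)) =
        (\<Sum>a\<in>{0..<Suc k}. W' $$ (i,a) * W' $$ (j,a)) + P' $$ (i,j)" by blast
    show ?thesis
    proof (intro exI[of _ r] exI[of _ Q] conjI allI impI, rule Q)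
      fix i j assume i: "i < N" and j: "j < N"
      have "(\<Sum>a\<in>{0..<Suc k}. W' $$ (i,a) * W' $$ (j,a)) = (\<Sum>a\<in>{0..<k}. W' $$ (i,a) * W' $$ (j,a)) + w i * w j"
        using i j by (simp add: W'_def)
      also have "(\<Sum>a\<in>{0..<k}. W' $$ (i,a) * W' $$ (j,a)) = (\<Sum>a\<in>{0..<k}. W $$ (i,a) * W $$ (j,a))"
        using i j by (auto intro!: sum.cong simp: W'_def)
      finally show "(\<Sum>a\<in>{0..<r}. Q $$ (i,a) * Q $$ (j,a)) = (\<Sum>a\<in>{0..<k}. W $$ (i,a) * W $$ (j,a)) + P $$ (i,j)"
        using QQ i j by (simp add: P'_def)
    qed
  qed
qed

lemma orth_decomp:
  fixes P :: "'f::field mat"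
  assumes ch: "CHAR('f) = 2" and si: "symidem N P" and g: "good N P"
  shows "\<exists>r Q. orthon N r Q \<and> (\<forall>i<N. \<forall>j<N. (\<Sum>a\<in>{0..<r}. Q $$ (i,a) * Q $$ (j,a)) = P $$ (i,j))"
proof -
  have "orthon N 0 (0\<^sub>m N 0 :: 'f mat)" unfolding orthon_def by auto
  from orth_iter[OF ch refl si g this] show ?thesis by auto
qed



lemma mat2_eq_iff:
  assumes "A \<in> carrier_mat 2 2" "B \<in> carrier_mat 2 2"
  shows "A = B \<longleftrightarrow> A $$ (0,0) = B $$ (0,0) \<and> A $$ (0,1) = B $$ (0,1) \<and> A $$ (1,0) = B $$ (1,0) \<and> A $$ (1,1) = B $$ (1,1)"
proof
  assume "A $$ (0,0) = B $$ (0,0) \<and> A $$ (0,1) = B $$ (0,1) \<and> A $$ (1,0) = B $$ (1,0) \<and> A $$ (1,1) = B $$ (1,1)"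
  thus "A = B"
    by (intro eq_matI, insert assms, auto simp: less_2_cases_iff)
qed simp

lemma mult2:
  assumes "A \<in> carrier_mat 2 2" "B \<in> carrier_mat 2 2" "i < 2" "j < 2"
  shows "(A * B) $$ (i,j) = A $$ (i,0) * B $$ (0,j) + A $$ (i,1) * B $$ (1,j)"
  using mult_entry[OF assms] by (simp add: numeral_2_eq_2)

lemma unit2_carrier[simp]: "unit2 i j \<in> carrier_mat 2 2" unfolding unit2_def by simp

lemma unit2_dims[simp]: "dim_row (unit2 i j) = 2" "dim_col (unit2 i j) = 2" unfolding unit2_def by auto

lemma unit2_index[simp]: "k < 2 \<Longrightarrow> l < 2 \<Longrightarrow> (unit2 i j :: 'f::field mat) $$ (k,l) = (if k = i \<and> l = j then 1 else 0)"
  unfolding unit2_def by simp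

lemma unit2_mult: "i < 2 \<Longrightarrow> j < 2 \<Longrightarrow> k < 2 \<Longrightarrow> l < 2 \<Longrightarrow>
   (unit2 i j :: 'f::field mat) * unit2 k l = (if j = k then unit2 i l else 0\<^sub>m 2 2)"
  by (subst mat2_eq_iff, auto simp: mult2 mult_carrier_mat[OF unit2_carrier unit2_carrier] simp del: index_mult_mat(1))

lemma moi_facts:
  assumes "mat_orthogonal_involution 2 \<tau>"
  shows "\<And>x. x \<in> carrier_mat 2 2 \<Longrightarrow> \<tau> x \<in> carrier_mat 2 2"
    and "\<And>x y. x \<in> carrier_mat 2 2 \<Longrightarrow> y \<in> carrier_mat 2 2 \<Longrightarrow> \<tau> (x + y) = \<tau> x + \<tau> y"
    and "\<And>x y. x \<in> carrier_mat 2 2 \<Longrightarrow> y \<in> carrier_mat 2 2 \<Longrightarrow> \<tau> (x * y) = \<tau> y * \<tau> x"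
    and "\<And>x. x \<in> carrier_mat 2 2 \<Longrightarrow> \<tau> (\<tau> x) = x"
    and "\<And>c x. x \<in> carrier_mat 2 2 \<Longrightarrow> \<tau> (c \<cdot>\<^sub>m x) = c \<cdot>\<^sub>m \<tau> x"
    and "\<And>x. x \<in> carrier_mat 2 2 \<Longrightarrow> x + \<tau> x \<noteq> 1\<^sub>m 2"
  using assms unfolding mat_orthogonal_involution_def by auto

lemma moi_zero: assumes "mat_orthogonal_involution 2 (\<tau> :: 'f::field mat \<Rightarrow> 'f mat)"
  shows "\<tau> (0\<^sub>m 2 2) = 0\<^sub>m 2 2"
proof -
  note F = moi_facts[OF assms]
  have z: "0\<^sub>m 2 2 \<in> carrier_mat 2 2" by simp
  have "\<tau> (0\<^sub>m 2 2) = \<tau> (0\<^sub>m 2 2 + 0\<^sub>m 2 2)" by simp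
  also have "\<dots> = \<tau> (0\<^sub>m 2 2) + \<tau> (0\<^sub>m 2 2)" by (rule F(2)[OF z z])
  finally have "\<tau> (0\<^sub>m 2 2) + \<tau> (0\<^sub>m 2 2) = \<tau> (0\<^sub>m 2 2) + 0\<^sub>m 2 2"
    using F(1)[OF z] by simp
  hence "\<tau> (0\<^sub>m 2 2) + \<tau> (0\<^sub>m 2 2) = \<tau> (0\<^sub>m 2 2)" using F(1)[OF z] by simp
  note e = this
  show ?thesis
  proof (rule eq_matI)
    fix i j assume i: "i < dim_row (0\<^sub>m 2 2 :: 'f mat)" and j: "j < dim_col (0\<^sub>m 2 2 :: 'f mat)"
    have "(\<tau> (0\<^sub>m 2 2) + \<tau> (0\<^sub>m 2 2)) $$ (i,j) = \<tau> (0\<^sub>m 2 2) $$ (i,j)" using e by simp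
    hence "\<tau> (0\<^sub>m 2 2) $$ (i,j) + \<tau> (0\<^sub>m 2 2) $$ (i,j) = \<tau> (0\<^sub>m 2 2) $$ (i,j)"
      using i j F(1)[OF z] by simp
    hence "\<tau> (0\<^sub>m 2 2) $$ (i,j) = 0" by (simp only: add_cancel_left_right)
    thus "\<tau> (0\<^sub>m 2 2) $$ (i,j) = 0\<^sub>m 2 2 $$ (i,j)" using i j by simp
  qed (insert F(1)[OF z], auto)
qed

lemma moi_one: assumes "mat_orthogonal_involution 2 (\<tau> :: 'f::field mat \<Rightarrow> 'f mat)"
  shows "\<tau> (1\<^sub>m 2) = 1\<^sub>m 2"
proof -
  note F = moi_facts[OF assms]
  have o: "1\<^sub>m 2 \<in> carrier_mat 2 2" by simp
  have t1: "\<tau> (1\<^sub>m 2) \<in> carrier_mat 2 2" by (rule F(1)[OF o])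
  have "\<tau> (\<tau> (1\<^sub>m 2) * 1\<^sub>m 2) = \<tau> (1\<^sub>m 2) * \<tau> (\<tau> (1\<^sub>m 2))" by (rule F(3)[OF t1 o])
  also have "\<dots> = \<tau> (1\<^sub>m 2) * 1\<^sub>m 2" using F(4)[OF o] by simp
  finally show ?thesis using t1 F(4)[OF o] by simp
qed


lemma m2_f:
  assumes ch: "CHAR('f::field) = 2" and moi: "mat_orthogonal_involution 2 (\<tau> :: 'f mat \<Rightarrow> 'f mat)"
  shows "\<exists>v j. j < 2 \<and> v j = (1::'f) \<and>
    \<tau> (mat 2 2 (\<lambda>(k,l). if l = j then v k else 0)) = mat 2 2 (\<lambda>(k,l). if l = j then v k else 0)"
proof (cases "\<exists>i<2. \<exists>j<2. \<tau> (unit2 i j) $$ (j,i) \<noteq> 0")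
  case True
  note F = moi_facts[OF moi]
  from True obtain i j where i: "i < 2" and j: "j < 2" and q: "\<tau> (unit2 i j) $$ (j,i) \<noteq> 0" by auto
  define T where "T = \<tau> (unit2 i j)"
  define q where "q = T $$ (j,i)"
  have T: "T \<in> carrier_mat 2 2" unfolding T_def by (rule F(1), simp)
  define v where "v k = T $$ (k,i) / q" for k
  have f: "mat 2 2 (\<lambda>(k,l). if l = j then v k else 0) = (1/q) \<cdot>\<^sub>m (T * unit2 i j)"
  proof (rule eq_matI)
    fix k l assume k: "k < dim_row ((1/q) \<cdot>\<^sub>m (T * unit2 i j))" and l: "l < dim_col ((1/q) \<cdot>\<^sub>m (T * unit2 i j))"
    hence k: "k < 2" and l: "l < 2" using T by auto
    show "mat 2 2 (\<lambda>(k,l). if l = j then v k else 0) $$ (k,l) = ((1/q) \<cdot>\<^sub>m (T * unit2 i j)) $$ (k,l)"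
      using k l i j T carrier_matD[OF T] by (auto simp: mult2 v_def less_2_cases_iff simp del: index_mult_mat(1))
  qed (insert T, auto)
  have "\<tau> ((1/q) \<cdot>\<^sub>m (T * unit2 i j)) = (1/q) \<cdot>\<^sub>m (T * unit2 i j)"
    using F(5)[of "T * unit2 i j" "1/q"] F(3)[OF T unit2_carrier[of i j]] F(4)[OF unit2_carrier[of i j]] T
    unfolding T_def[symmetric] by simp
  moreover have "v j = 1" using q unfolding v_def q_def T_def by simp
  ultimately show ?thesis using j f by metis
next
  case False
  note F = moi_facts[OF moi]
  define T where "T i j = \<tau> (unit2 i j)" for i j
  have Tc: "T i j \<in> carrier_mat 2 2" for i j unfolding T_def by (rule F(1), simp)
  have Td[simp]: "dim_row (T i j) = 2" "dim_col (T i j) = 2" for i j using Tc[of i j] by auto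
  have TT: "\<tau> (T i j) = unit2 i j" for i j unfolding T_def by (rule F(4), simp)
  have Tm: "\<tau> (unit2 i j * unit2 k l) = T k l * T i j" for i j k l unfolding T_def by (rule F(3), auto)
  have hyp: "T i j $$ (j,i) = 0" if "i < 2" "j < 2" for i j using False that unfolding T_def by auto
  have e: "unit2 0 0 + unit2 1 1 = (1\<^sub>m 2 :: 'f mat)" by (subst mat2_eq_iff, auto)
  have s: "T 0 0 + T 1 1 = 1\<^sub>m 2" using F(2)[of "unit2 0 0" "unit2 1 1"] e moi_one[OF moi] unfolding T_def by simp
  have Tm': "T k l * T i j = (if j = k then T i l else 0\<^sub>m 2 2)" if "i < 2" "j < 2" "k < 2" "l < 2" for i j k l
  proof -
    have "T k l * T i j = \<tau> (unit2 i j * unit2 k l)" by (rule Tm[symmetric])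
    also have "\<dots> = \<tau> (if j = k then unit2 i l else 0\<^sub>m 2 2)" using that by (simp add: unit2_mult)
    finally show ?thesis using moi_zero[OF moi] unfolding T_def by simp
  qed
  have id00: "T 0 0 * T 0 0 = T 0 0" using Tm'[of 0 0 0 0] by simp
  have r1: "T 0 0 * T 1 0 = T 1 0" using Tm'[of 1 0 0 0] by simp
  have r2: "T 1 0 * T 0 0 = 0\<^sub>m 2 2" using Tm'[of 0 0 1 0] by simp
  have r3: "T 0 1 * T 0 0 = T 0 1" using Tm'[of 0 0 0 1] by simp
  have r4: "T 0 0 * T 0 1 = 0\<^sub>m 2 2" using Tm'[of 0 1 0 0] by simp
  have nz: "T i j \<noteq> 0\<^sub>m 2 2" if "i < 2" "j < 2" for i j
  proof
    assume "T i j = 0\<^sub>m 2 2"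
    hence "unit2 i j = (0\<^sub>m 2 2 :: 'f mat)" using TT[of i j] moi_zero[OF moi] by simp
    hence "(unit2 i j :: 'f mat) $$ (i,j) = 0\<^sub>m 2 2 $$ (i,j)" by simp
    with that show False by simp
  qed
  have a: "T 0 0 $$ (0,0) = 0" using hyp[of 0 0] by simp
  have d: "T 0 0 $$ (1,1) = 1"
  proof -
    have "(T 0 0 + T 1 1) $$ (1,1) = 1" using s by simp
    hence "T 0 0 $$ (1,1) + T 1 1 $$ (1,1) = 1" using Tc by simp
    thus ?thesis using hyp[of 1 1] by simp
  qed
  have bc: "T 0 0 $$ (0,1) * T 0 0 $$ (1,0) = 0"
  proof -
    have "(T 0 0 * T 0 0) $$ (0,0) = T 0 0 $$ (0,0)" using id00 by simp
    thus ?thesis using a Tc[of 0 0] by (simp add: mult2 del: index_mult_mat(1))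
  qed
  have b0: "T 0 0 $$ (0,1) = 0"
  proof (rule ccontr)
    assume b: "T 0 0 $$ (0,1) \<noteq> 0"
    have x: "(T 1 0 * T 0 0) $$ (k,l) = 0" if "k < 2" "l < 2" for k l using r2 that by simp
    have y: "(T 0 0 * T 1 0) $$ (k,l) = T 1 0 $$ (k,l)" for k l using r1 by simp
    have be: "T 1 0 $$ (0,1) = 0" using hyp[of 1 0] by simp
    have bc': "T 0 0 $$ (1,0) = 0" using bc b by simp
    have al: "T 1 0 $$ (0,0) = 0" using x[of 0 1] b be Tc[of 1 0] Tc[of 0 0] by (simp add: mult2 del: index_mult_mat(1))
    have ga: "T 1 0 $$ (1,0) = 0" using y[of 0 0] al a b Tc[of 1 0] Tc[of 0 0] by (simp add: mult2 del: index_mult_mat(1))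
    have de: "T 1 0 $$ (1,1) = 0" using x[of 1 1] ga d Tc[of 1 0] Tc[of 0 0] by (simp add: mult2 del: index_mult_mat(1))
    have "T 1 0 = 0\<^sub>m 2 2" using al be ga de Tc[of 1 0] by (subst mat2_eq_iff, auto)
    with nz[of 1 0] show False by simp
  qed
  have c0: "T 0 0 $$ (1,0) = 0"
  proof (rule ccontr)
    assume c: "T 0 0 $$ (1,0) \<noteq> 0"
    have x: "(T 0 0 * T 0 1) $$ (k,l) = 0" if "k < 2" "l < 2" for k l using r4 that by simp
    have y: "(T 0 1 * T 0 0) $$ (k,l) = T 0 1 $$ (k,l)" for k l using r3 by simp
    have ga: "T 0 1 $$ (1,0) = 0" using hyp[of 0 1] by simp
    have al: "T 0 1 $$ (0,0) = 0" using x[of 1 0] c ga a Tc[of 0 1] Tc[of 0 0] by (simp add: mult2 del: index_mult_mat(1))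
    have de: "T 0 1 $$ (1,1) = 0" using y[of 1 0] c ga a Tc[of 0 1] Tc[of 0 0] by (simp add: mult2 del: index_mult_mat(1))
    have be: "T 0 1 $$ (0,1) = 0" using x[of 1 1] c de d Tc[of 0 1] Tc[of 0 0] by (simp add: mult2 del: index_mult_mat(1))
    have "T 0 1 = 0\<^sub>m 2 2" using al be ga de Tc[of 0 1] by (subst mat2_eq_iff, auto)
    with nz[of 0 1] show False by simp
  qed
  have "T 0 0 = unit2 1 1" using a b0 c0 d Tc[of 0 0] by (subst mat2_eq_iff, auto)
  hence "unit2 0 0 + \<tau> (unit2 0 0) = 1\<^sub>m 2" using e unfolding T_def by simp
  with F(6)[of "unit2 0 0"] show ?thesis by simp
qed



lemma dim_eq2:
  fixes Q U W P :: "'f::field mat"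
  assumes Q: "Q \<in> carrier_mat N r" and U: "U \<in> carrier_mat N N" and W: "W \<in> carrier_mat N N"
    and P: "P \<in> carrier_mat N N"
    and QQ: "transpose_mat Q * Q = 1\<^sub>m r" and QQt: "Q * transpose_mat Q = P"
    and UW: "U * W = P" and WUP: "W * U + P = 1\<^sub>m N" and PW: "P * W = 0\<^sub>m N N" and UP: "U * P = 0\<^sub>m N N"
  shows "N = r + r"
proof -
  have Qt: "transpose_mat Q \<in> carrier_mat r N" using Q by simp
  have QtP: "transpose_mat Q * P = transpose_mat Q"
    using Q Qt unfolding QQt[symmetric] by (simp add: assoc_mult_mat[symmetric, OF Qt Q Qt] QQ)
  have PQ: "P * Q = Q"
    using Q Qt unfolding QQt[symmetric] by (simp add: QQ)
  define L where "L = four_block_mat (transpose_mat Q) (0\<^sub>m r 0) (transpose_mat Q * U) (0\<^sub>m r 0)"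
  define M where "M = four_block_mat Q (W * Q) (0\<^sub>m 0 r) (0\<^sub>m 0 r)"
  have Lc: "L \<in> carrier_mat (r + r) (N + 0)" unfolding L_def by (rule four_block_carrier_mat, insert Qt, auto)
  have Mc: "M \<in> carrier_mat (N + 0) (r + r)" unfolding M_def by (rule four_block_carrier_mat, insert Q, auto)
  have a1: "transpose_mat Q * (W * Q) = 0\<^sub>m r r"
  proof -
    have "transpose_mat Q * (W * Q) = (transpose_mat Q * P) * (W * Q)" using QtP by simp
    also have "\<dots> = transpose_mat Q * ((P * W) * Q)"
      using assoc_mult_mat[OF Qt P mult_carrier_mat[OF W Q]] assoc_mult_mat[OF P W Q] by simp
    also have "\<dots> = 0\<^sub>m r r" using PW Qt Q by simp
    finally show ?thesis .
  qed
  have a2: "transpose_mat Q * U * Q = 0\<^sub>m r r"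
  proof -
    have "transpose_mat Q * U * Q = transpose_mat Q * U * (P * Q)" using PQ by simp
    also have "\<dots> = transpose_mat Q * ((U * P) * Q)"
      using assoc_mult_mat[OF Qt U mult_carrier_mat[OF P Q]] assoc_mult_mat[OF U P Q] assoc_mult_mat[OF mult_carrier_mat[OF Qt U] P Q] by simp
    also have "\<dots> = 0\<^sub>m r r" using UP Qt Q by simp
    finally show ?thesis .
  qed
  have a3: "transpose_mat Q * U * (W * Q) = 1\<^sub>m r"
  proof -
    have "transpose_mat Q * U * (W * Q) = transpose_mat Q * ((U * W) * Q)"
      using assoc_mult_mat[OF Qt U mult_carrier_mat[OF W Q]] assoc_mult_mat[OF U W Q] by simp
    also have "\<dots> = 1\<^sub>m r" using UW PQ QQ by simp
    finally show ?thesis .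
  qed
  have "L * M = four_block_mat (transpose_mat Q * Q + 0\<^sub>m r 0 * 0\<^sub>m 0 r) (transpose_mat Q * (W * Q) + 0\<^sub>m r 0 * 0\<^sub>m 0 r)
     (transpose_mat Q * U * Q + 0\<^sub>m r 0 * 0\<^sub>m 0 r) (transpose_mat Q * U * (W * Q) + 0\<^sub>m r 0 * 0\<^sub>m 0 r)"
    unfolding L_def M_def by (rule mult_four_block_mat, insert Q Qt U W, auto)
  also have "\<dots> = four_block_mat (1\<^sub>m r) (0\<^sub>m r r) (0\<^sub>m r r) (1\<^sub>m r)"
    using QQ a1 a2 a3 by simp
  also have "\<dots> = 1\<^sub>m (r + r)" by simp
  finally have LM: "L * M = 1\<^sub>m (r + r)" .
  have WUWU: "W * U * (W * U) = W * U"
  proof -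
    have "(W * U + P) * (W * U) = W * U" using WUP W U by simp
    moreover have "(W * U + P) * (W * U) = W * U * (W * U) + P * (W * U)"
      by (rule add_mult_distrib_mat, insert W U P, auto)
    moreover have "P * (W * U) = 0\<^sub>m N N" using PW P W U assoc_mult_mat[OF P W U] by simp
    ultimately show ?thesis using right_add_zero_mat[OF mult_carrier_mat[OF mult_carrier_mat[OF W U] mult_carrier_mat[OF W U]]] by simp
  qed
  have b1: "Q * transpose_mat Q + W * Q * (transpose_mat Q * U) = 1\<^sub>m N"
  proof -
    have "W * Q * (transpose_mat Q * U) = W * (Q * transpose_mat Q) * U"
      using assoc_mult_mat[OF W Q mult_carrier_mat[OF Qt U]] assoc_mult_mat[OF Q Qt U]
        assoc_mult_mat[OF W mult_carrier_mat[OF Q Qt] U] by simp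
    also have "\<dots> = W * (U * W) * U" using QQt UW by simp
    also have "\<dots> = W * U * (W * U)"
      using assoc_mult_mat[OF W mult_carrier_mat[OF U W] U] assoc_mult_mat[OF W U W] assoc_mult_mat[OF mult_carrier_mat[OF W U] W U] by simp
    also have "\<dots> = W * U" by (rule WUWU)
    finally show ?thesis using QQt WUP comm_add_mat[OF P mult_carrier_mat[OF W U]] by simp
  qed
  have "M * L = four_block_mat (Q * transpose_mat Q + W * Q * (transpose_mat Q * U)) (Q * 0\<^sub>m r 0 + W * Q * 0\<^sub>m r 0)
     (0\<^sub>m 0 r * transpose_mat Q + 0\<^sub>m 0 r * (transpose_mat Q * U)) (0\<^sub>m 0 r * 0\<^sub>m r 0 + 0\<^sub>m 0 r * 0\<^sub>m r 0)"
    unfolding L_def M_def by (rule mult_four_block_mat, insert Q Qt U W, auto)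
  also have "\<dots> = four_block_mat (1\<^sub>m N) (0\<^sub>m N 0) (0\<^sub>m 0 N) (1\<^sub>m 0)"
    using b1 Q Qt U W by (intro cong_four_block_mat, auto)
  also have "\<dots> = 1\<^sub>m (N + 0)" by (rule four_block_one_mat)
  finally have MLeq: "M * L = 1\<^sub>m (N + 0)" .
  have "r + r \<le> N + 0" by (rule dim_le[OF Mc Lc LM])
  moreover have "N + 0 \<le> r + r" by (rule dim_le[OF Lc Mc MLeq])
  ultimately show ?thesis by simp
qed



lemma FA:
  assumes "F_algebra (sm :: 'f::field \<Rightarrow> 'a::ring_1 \<Rightarrow> 'a)"
  shows "sm c (x + y) = sm c x + sm c y" "sm (c + d) x = sm c x + sm d x"
    "sm (c * d) x = sm c (sm d x)" "sm 1 x = x" "sm c (x * y) = sm c x * y" "sm c (x * y) = x * sm c y"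
  using assms unfolding F_algebra_def by blast+

lemma FA0:
  assumes "F_algebra (sm :: 'f::field \<Rightarrow> 'a::ring_1 \<Rightarrow> 'a)"
  shows "sm 0 x = 0" "sm c 0 = 0" "sm c 1 * x = sm c x" "x * sm c 1 = sm c x"
    "sm c a * sm d b = sm (c * d) (a * b)"
proof -
  show "sm 0 x = 0" using FA(2)[OF assms, of 0 0 x] by simp
  show "sm c 0 = 0" using FA(1)[OF assms, of c 0 0] by simp
  show "sm c 1 * x = sm c x" using FA(5)[OF assms, of c 1 x] by simp
  show "x * sm c 1 = sm c x" using FA(6)[OF assms, of c x 1] by simp
  have "sm c a * sm d b = sm c (a * sm d b)" using FA(5)[OF assms] by simp
  also have "\<dots> = sm c (sm d (a * b))" using FA(6)[OF assms] by simp
  also have "\<dots> = sm (c * d) (a * b)" using FA(3)[OF assms] by simp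
  finally show "sm c a * sm d b = sm (c * d) (a * b)" .
qed

lemma sm_comm:
  assumes "F_algebra (sm :: 'f::field \<Rightarrow> 'a::ring_1 \<Rightarrow> 'a)"
  shows "sm c (sm d x) = sm d (sm c x)"
  using FA(3)[OF assms, of c d x] FA(3)[OF assms, of d c x] by (simp add: mult.commute)

definition tens :: "('f::field \<Rightarrow> 'a::ring_1 \<Rightarrow> 'a) \<Rightarrow> 'a \<Rightarrow> 'f mat \<Rightarrow> 'a mat" where
  "tens sm a m = mat 2 2 (\<lambda>(k,l). sm (m $$ (k,l)) a)"

lemma tens_carrier[simp]: "tens sm a m \<in> carrier_mat 2 2" unfolding tens_def by simp
lemma tens_dims[simp]: "dim_row (tens sm a m) = 2" "dim_col (tens sm a m) = 2" unfolding tens_def by simp_all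
lemma tens_index[simp]: "k < 2 \<Longrightarrow> l < 2 \<Longrightarrow> tens sm a m $$ (k,l) = sm (m $$ (k,l)) a"
  unfolding tens_def by simp

lemma tens_mult:
  assumes fa: "F_algebra sm" and m: "m \<in> carrier_mat 2 2" and m': "m' \<in> carrier_mat 2 2"
  shows "tens sm a m * tens sm b m' = tens sm (a * b) (m * m')"
  by (subst mat2_eq_iff, insert m m', auto simp: mult2 FA0(5)[OF fa] FA(2)[OF fa, symmetric] simp del: index_mult_mat(1))

lemma tens_add_left:
  assumes fa: "F_algebra sm" shows "tens sm (a + b) m = tens sm a m + tens sm b m"
  by (subst mat2_eq_iff, auto simp: FA[OF fa])

lemma tens_add_right:
  assumes fa: "F_algebra sm" and m: "m \<in> carrier_mat 2 2" and m': "m' \<in> carrier_mat 2 2"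
  shows "tens sm a (m + m') = tens sm a m + tens sm a m'"
  by (subst mat2_eq_iff, insert m m', auto simp: FA[OF fa])

lemma tens_smult:
  assumes fa: "F_algebra sm"
  shows "map_mat (sm c) (tens sm a m) = tens sm (sm c a) m"
  by (subst mat2_eq_iff, auto simp: FA[OF fa, symmetric] mult.commute)

lemma tens_one:
  assumes fa: "F_algebra sm" shows "tens sm 1 (1\<^sub>m 2) = 1\<^sub>m 2"
  by (subst mat2_eq_iff, auto simp: FA[OF fa] FA0[OF fa])

lemma tens_zero:
  assumes fa: "F_algebra sm" shows "tens sm a (0\<^sub>m 2 2) = 0\<^sub>m 2 2"
  by (subst mat2_eq_iff, auto simp: FA0[OF fa])

lemma tau_expand:
  assumes moi: "mat_orthogonal_involution 2 \<tau>" and m: "m \<in> carrier_mat 2 2"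
  shows "\<tau> m = m $$ (0,0) \<cdot>\<^sub>m \<tau> (unit2 0 0) + m $$ (0,1) \<cdot>\<^sub>m \<tau> (unit2 0 1)
     + m $$ (1,0) \<cdot>\<^sub>m \<tau> (unit2 1 0) + m $$ (1,1) \<cdot>\<^sub>m \<tau> (unit2 1 1)"
proof -
  note F = moi_facts[OF moi]
  have e: "m = m $$ (0,0) \<cdot>\<^sub>m unit2 0 0 + m $$ (0,1) \<cdot>\<^sub>m unit2 0 1
     + m $$ (1,0) \<cdot>\<^sub>m unit2 1 0 + m $$ (1,1) \<cdot>\<^sub>m unit2 1 1"
    by (subst mat2_eq_iff, insert m, auto)
  have c: "c \<cdot>\<^sub>m unit2 i j \<in> carrier_mat 2 2" for c i j by simp
  show ?thesis
    by (subst e, simp only: F(2) F(5) c add_carrier_mat unit2_carrier)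
qed

lemma tensinv:
  assumes fa: "F_algebra sm" and inv: "involution_first_kind sm \<sigma>"
    and moi: "mat_orthogonal_involution 2 \<tau>" and m: "m \<in> carrier_mat 2 2"
  shows "tensor_M2_inv sm \<sigma> \<tau> (tens sm a m) = tens sm (\<sigma> a) (\<tau> m)"
proof -
  note F = moi_facts[OF moi]
  have sig: "\<sigma> (sm c x) = sm c (\<sigma> x)" for c x using inv unfolding involution_first_kind_def by auto
  have tc: "\<tau> (unit2 i j) \<in> carrier_mat 2 2" for i j by (rule F(1), simp)
  have td[simp]: "dim_row (\<tau> (unit2 i j)) = 2" "dim_col (\<tau> (unit2 i j)) = 2" for i j using tc[of i j] by auto
  show ?thesis
    unfolding tensor_M2_inv_def
    by (subst tau_expand[OF moi m], subst mat2_eq_iff, auto simp: numeral_2_eq_2 sig FA[OF fa, symmetric] ac_simps)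
qed

lemma fXf:
  assumes fa: "F_algebra sm" and X: "X \<in> carrier_mat 2 2" and j: "j < 2"
  shows "tens sm 1 (mat 2 2 (\<lambda>(k,l). if l = j then v k else 0)) * X * tens sm 1 (mat 2 2 (\<lambda>(k,l). if l = j then v k else 0))
    = tens sm (sm (v 0) (X $$ (j,0)) + sm (v 1) (X $$ (j,1))) (mat 2 2 (\<lambda>(k,l). if l = j then v k else 0))"
  using j X
  by (subst mat2_eq_iff, auto simp: less_2_cases_iff mult2 FA0[OF fa] FA[OF fa] sm_comm[OF fa] mult_carrier_mat[OF tens_carrier X]
      simp del: index_mult_mat(1))



lemma m2_units:
  fixes v :: "nat \<Rightarrow> 'f::field"
  assumes j: "j < 2" and vj: "v j = 1"
  defines "f \<equiv> mat 2 2 (\<lambda>(k,l). if l = j then v k else 0)"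
    and "u \<equiv> mat 2 2 (\<lambda>(k,l). v k * (if l = j then - v (1 - j) else 1))"
    and "w \<equiv> mat 2 2 (\<lambda>(k,l). if k = 1 - j \<and> l = j then 1 else 0)"
  shows "f * f = f" "u * w = f" "w * u + f = 1\<^sub>m 2" "f * w = 0\<^sub>m 2 2" "u * f = 0\<^sub>m 2 2"
    "f \<in> carrier_mat 2 2" "u \<in> carrier_mat 2 2" "w \<in> carrier_mat 2 2"
proof -
  show fc: "f \<in> carrier_mat 2 2" and uc: "u \<in> carrier_mat 2 2" and wc: "w \<in> carrier_mat 2 2"
    unfolding f_def u_def w_def by auto
  have js: "j = 0 \<or> j = 1" using j by auto
  show "f * f = f" "u * w = f" "w * u + f = 1\<^sub>m 2" "f * w = 0\<^sub>m 2 2" "u * f = 0\<^sub>m 2 2"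
    using js vj fc uc wc
    by (auto simp: mat2_eq_iff mult2 mult_carrier_mat[OF fc fc] mult_carrier_mat[OF uc wc] mult_carrier_mat[OF wc uc]
      mult_carrier_mat[OF fc wc] mult_carrier_mat[OF uc fc] f_def u_def w_def simp del: index_mult_mat(1))
qed

lemma alt_trick:
  fixes P :: "'f::field mat"
  assumes ch: "CHAR('f) = 2" and P: "P \<in> carrier_mat N N" and sym: "transpose_mat P = P" and idem: "P * P = P"
    and PO: "P * ones N = 0\<^sub>m N 1"
  shows "\<exists>Y \<in> carrier_mat N N. P * Y * P = Y \<and> Y + transpose_mat Y = P"
proof -
  define D where "D = mat N N (\<lambda>(i,j). if i < j then (1::'f) else 0)"
  have Dc: "D \<in> carrier_mat N N" unfolding D_def by simp
  have Dtc: "transpose_mat D \<in> carrier_mat N N" unfolding D_def by simp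
  have Oc: "ones N \<in> carrier_mat N 1" unfolding ones_def by simp
  have Otc: "transpose_mat (ones N) \<in> carrier_mat 1 N" unfolding ones_def by simp
  have DD: "D + transpose_mat D + 1\<^sub>m N = ones N * transpose_mat (ones N)"
    by (rule eq_matI, auto simp: D_def ones_def scalar_prod_def)
  define Y where "Y = P * D * P"
  have Yc: "Y \<in> carrier_mat N N" unfolding Y_def using P Dc by simp
  have Yt: "transpose_mat Y = P * transpose_mat D * P"
    unfolding Y_def using P Dc
    by (simp only: transpose_mult[OF mult_carrier_mat[OF P Dc] P] transpose_mult[OF P Dc] sym,
        simp add: assoc_mult_mat[OF P Dtc P])
  have e1: "P * (D + transpose_mat D + 1\<^sub>m N) * P = Y + transpose_mat Y + P"
  proof -
    have "P * (D + transpose_mat D + 1\<^sub>m N) = P * D + P * transpose_mat D + P"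
      using P Dc Dtc by (simp add: mult_add_distrib_mat[OF P] add_carrier_mat
        assoc_add_mat[OF mult_carrier_mat[OF P Dc] mult_carrier_mat[OF P Dtc] P])
    hence "P * (D + transpose_mat D + 1\<^sub>m N) * P = (P * D + P * transpose_mat D + P) * P" by simp
    also have "\<dots> = (P * D + P * transpose_mat D) * P + P * P"
      by (rule add_mult_distrib_mat[OF add_carrier_mat[OF mult_carrier_mat[OF P Dtc]] P P])
    also have "(P * D + P * transpose_mat D) * P = P * D * P + P * transpose_mat D * P"
      by (rule add_mult_distrib_mat[OF mult_carrier_mat[OF P Dc] mult_carrier_mat[OF P Dtc] P])
    finally show ?thesis using Yt idem unfolding Y_def by simp
  qed
  have e2: "P * (ones N * transpose_mat (ones N)) * P = 0\<^sub>m N N"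
  proof -
    have "P * (ones N * transpose_mat (ones N)) * P = (P * ones N) * (transpose_mat (ones N) * P)"
      using P Oc Otc by (simp add: assoc_mult_mat[OF P Oc Otc, symmetric] assoc_mult_mat[OF mult_carrier_mat[OF P Oc] Otc P])
    also have "\<dots> = 0\<^sub>m N N" using PO left_mult_zero_mat[OF mult_carrier_mat[OF Otc P]] by simp
    finally show ?thesis .
  qed
  have z: "Y + transpose_mat Y + P = 0\<^sub>m N N" using e1 e2 DD by simp
  have "Y + transpose_mat Y = P"
  proof (rule eq_matI)
    fix i j assume i: "i < dim_row P" and j: "j < dim_col P"
    have "(Y + transpose_mat Y + P) $$ (i,j) = 0" using z i j P by simp
    hence "Y $$ (i,j) + Y $$ (j,i) + P $$ (i,j) = 0" using i j P Yc by (simp add: add.assoc)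
    hence "Y $$ (i,j) + Y $$ (j,i) = - P $$ (i,j)" by (simp add: eq_neg_iff_add_eq_0)
    thus "(Y + transpose_mat Y) $$ (i,j) = P $$ (i,j)" using i j P Yc char2_neg[OF ch] by simp
  qed (insert P Yc, auto)
  moreover have "P * Y * P = Y"
  proof -
    have PDc: "P * D \<in> carrier_mat N N" using P Dc by simp
    have "P * Y = (P * P) * D * P" unfolding Y_def
      by (simp only: assoc_mult_mat[OF P Dc P] assoc_mult_mat[OF P P mult_carrier_mat[OF Dc P]]
         assoc_mult_mat[OF mult_carrier_mat[OF P P] Dc P])
    hence PY: "P * Y = Y" using idem unfolding Y_def by simp
    have "Y * P = P * D * (P * P)" unfolding Y_def
      by (simp only: assoc_mult_mat[OF PDc P P])
    hence YP: "Y * P = Y" using idem unfolding Y_def by simp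
    show ?thesis using PY YP by simp
  qed
  ultimately show ?thesis using Yc by blast
qed



context
  fixes Q P :: "'f::field mat" and N r :: nat
  assumes Q: "Q \<in> carrier_mat N r" and P: "P \<in> carrier_mat N N"
    and QQ: "transpose_mat Q * Q = 1\<^sub>m r" and QQt: "Q * transpose_mat Q = P"
begin

lemma Qt: "transpose_mat Q \<in> carrier_mat r N" using Q by simp

lemma cut_c: "Y \<in> carrier_mat N N \<Longrightarrow> transpose_mat Q * Y * Q \<in> carrier_mat r r"
  using Q by simp

lemma QtP: "transpose_mat Q * P = transpose_mat Q"
  unfolding QQt[symmetric] using assoc_mult_mat[OF Qt Q Qt, symmetric] QQ Qt by simp

lemma PQ: "P * Q = Q"
  unfolding QQt[symmetric] using assoc_mult_mat[OF Q Qt Q] QQ Q by simp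

lemma uncut: assumes Y: "Y \<in> carrier_mat N N" and PY: "P * Y = Y" and YP: "Y * P = Y"
  shows "Q * (transpose_mat Q * Y * Q) * transpose_mat Q = Y"
proof -
  have "Q * (transpose_mat Q * Y * Q) * transpose_mat Q = (Q * transpose_mat Q) * Y * (Q * transpose_mat Q)"
    using Q Qt Y
    by (simp only: assoc_mult_mat[OF Q mult_carrier_mat[OF mult_carrier_mat[OF Qt Y] Q] Qt]
       assoc_mult_mat[OF mult_carrier_mat[OF Qt Y] Q Qt] assoc_mult_mat[OF Qt Y mult_carrier_mat[OF Q Qt]]
       assoc_mult_mat[OF mult_carrier_mat[OF Q Qt] Y mult_carrier_mat[OF Q Qt]]
       assoc_mult_mat[OF Q Qt mult_carrier_mat[OF Y mult_carrier_mat[OF Q Qt]]])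
  also have "\<dots> = Y" using QQt PY YP by simp
  finally show ?thesis .
qed

lemma cut_uncut: assumes Z: "Z \<in> carrier_mat r r"
  shows "transpose_mat Q * (Q * Z * transpose_mat Q) * Q = Z"
proof -
  have "transpose_mat Q * (Q * Z * transpose_mat Q) * Q = (transpose_mat Q * Q) * Z * (transpose_mat Q * Q)"
    using Q Qt Z
    by (simp only: assoc_mult_mat[OF Qt mult_carrier_mat[OF mult_carrier_mat[OF Q Z] Qt] Q]
       assoc_mult_mat[OF mult_carrier_mat[OF Q Z] Qt Q] assoc_mult_mat[OF Q Z mult_carrier_mat[OF Qt Q]]
       assoc_mult_mat[OF mult_carrier_mat[OF Qt Q] Z mult_carrier_mat[OF Qt Q]]
       assoc_mult_mat[OF Qt Q mult_carrier_mat[OF Z mult_carrier_mat[OF Qt Q]]])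
  also have "\<dots> = Z" using QQ Z by simp
  finally show ?thesis .
qed

lemma uncut_fix: assumes Z: "Z \<in> carrier_mat r r"
  shows "P * (Q * Z * transpose_mat Q) * P = Q * Z * transpose_mat Q"
proof -
  have "P * (Q * Z * transpose_mat Q) * P = (P * Q) * Z * (transpose_mat Q * P)"
    using Q Qt Z P
    by (simp only: assoc_mult_mat[OF P mult_carrier_mat[OF mult_carrier_mat[OF Q Z] Qt] P]
       assoc_mult_mat[OF mult_carrier_mat[OF Q Z] Qt P] assoc_mult_mat[OF Q Z mult_carrier_mat[OF Qt P]]
       assoc_mult_mat[OF mult_carrier_mat[OF P Q] Z mult_carrier_mat[OF Qt P]]
       assoc_mult_mat[OF P Q mult_carrier_mat[OF Z mult_carrier_mat[OF Qt P]]])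
  also have "\<dots> = Q * Z * transpose_mat Q" using PQ QtP by simp
  finally show ?thesis .
qed

lemma cut_mult: assumes Y1: "Y1 \<in> carrier_mat N N" and Y2: "Y2 \<in> carrier_mat N N" and YP: "Y1 * P = Y1"
  shows "transpose_mat Q * (Y1 * Y2) * Q = (transpose_mat Q * Y1 * Q) * (transpose_mat Q * Y2 * Q)"
proof -
  have "(transpose_mat Q * Y1 * Q) * (transpose_mat Q * Y2 * Q) = transpose_mat Q * (Y1 * (Q * transpose_mat Q) * Y2) * Q"
    using Q Qt Y1 Y2
    by (simp only: assoc_mult_mat[OF Qt Y1 Q] assoc_mult_mat[OF Qt Y2 Q]
      assoc_mult_mat[OF Qt mult_carrier_mat[OF Y1 Q] mult_carrier_mat[OF Qt mult_carrier_mat[OF Y2 Q]]]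
      assoc_mult_mat[OF Y1 Q mult_carrier_mat[OF Qt mult_carrier_mat[OF Y2 Q]]]
      assoc_mult_mat[OF Qt mult_carrier_mat[OF mult_carrier_mat[OF Y1 mult_carrier_mat[OF Q Qt]] Y2] Q]
      assoc_mult_mat[OF mult_carrier_mat[OF Y1 mult_carrier_mat[OF Q Qt]] Y2 Q]
      assoc_mult_mat[OF Y1 mult_carrier_mat[OF Q Qt] mult_carrier_mat[OF Y2 Q]]
      assoc_mult_mat[OF Q Qt mult_carrier_mat[OF Y2 Q]])
  thus ?thesis using QQt YP by simp
qed

lemma cut_add: assumes Y1: "Y1 \<in> carrier_mat N N" and Y2: "Y2 \<in> carrier_mat N N"
  shows "transpose_mat Q * (Y1 + Y2) * Q = transpose_mat Q * Y1 * Q + transpose_mat Q * Y2 * Q"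
  using mult_add_distrib_mat[OF Qt Y1 Y2] add_mult_distrib_mat[OF mult_carrier_mat[OF Qt Y1] mult_carrier_mat[OF Qt Y2] Q]
  by simp

lemma cut_smult: assumes Y: "Y \<in> carrier_mat N N"
  shows "transpose_mat Q * (c \<cdot>\<^sub>m Y) * Q = c \<cdot>\<^sub>m (transpose_mat Q * Y * Q)"
  using mult_smult_distrib[OF Qt Y] mult_smult_assoc_mat[OF mult_carrier_mat[OF Qt Y] Q] by simp

lemma cut_transpose: assumes Y: "Y \<in> carrier_mat N N"
  shows "transpose_mat Q * transpose_mat Y * Q = transpose_mat (transpose_mat Q * Y * Q)"
proof -
  have Yt: "transpose_mat Y \<in> carrier_mat N N" using Y by simp
  show ?thesis
  using transpose_mult[OF mult_carrier_mat[OF Qt Y] Q] transpose_mult[OF Qt Y] Q Y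
    assoc_mult_mat[OF Qt Yt Q] by simp
qed

end



theorem lemma5p9:
  fixes sm :: "'f::field \<Rightarrow> 'a::ring_1 \<Rightarrow> 'a"
    and \<sigma> :: "'a \<Rightarrow> 'a"
    and \<tau> :: "'f mat \<Rightarrow> 'f mat"
    and n :: nat
  assumes "CHAR('f) = 2"
    and "central_simple_algebra sm"
    and "orthogonal_involution sm \<sigma>"
    and "mat_orthogonal_involution 2 \<tau>"
    and "alg_inv_iso (carrier_mat 2 2) (+) (*) (\<lambda>c X. map_mat (sm c) X) (tensor_M2_inv sm \<sigma> \<tau>)
           (carrier_mat (2^n) (2^n)) (+) (*) (\<lambda>c M. c \<cdot>\<^sub>m M) transpose_mat"
  shows "alg_inv_iso UNIV (+) (*) sm \<sigma>
           (carrier_mat (2^(n-1)) (2^(n-1))) (+) (*) (\<lambda>c M. c \<cdot>\<^sub>m M) transpose_mat"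
proof -
  note ch = assms(1)
  note moi = assms(4)
  have fa: "F_algebra sm" using assms(2) unfolding central_simple_algebra_def by auto
  have inv: "involution_first_kind sm \<sigma>" and orth: "\<And>x. x + \<sigma> x \<noteq> 1"
    using assms(3) unfolding orthogonal_involution_def by auto
  have sig_mult: "\<sigma> (x * y) = \<sigma> y * \<sigma> x" and sig_sig: "\<sigma> (\<sigma> x) = x" and sig_add: "\<sigma> (x + y) = \<sigma> x + \<sigma> y"
    for x y using inv unfolding involution_first_kind_def by auto
  have sig1: "\<sigma> 1 = 1"
  proof -
    have "\<sigma> (\<sigma> 1 * 1) = \<sigma> 1 * \<sigma> (\<sigma> 1)" by (rule sig_mult)
    thus ?thesis using sig_sig[of 1] by simp
  qed
  define N where "N = (2::nat)^n"
  from assms(5)[unfolded alg_inv_iso_def N_def[symmetric]] obtain \<phi> where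
    bij: "bij_betw \<phi> (carrier_mat 2 2) (carrier_mat N N)"
    and hom: "\<forall>x\<in>carrier_mat 2 2. \<forall>y\<in>carrier_mat 2 2. \<phi> (x + y) = \<phi> x + \<phi> y \<and> \<phi> (x * y) = \<phi> x * \<phi> y"
    and sc: "\<forall>c. \<forall>x\<in>carrier_mat 2 2. \<phi> (map_mat (sm c) x) = c \<cdot>\<^sub>m \<phi> x"
    and iv: "\<forall>x\<in>carrier_mat 2 2. \<phi> (tensor_M2_inv sm \<sigma> \<tau> x) = transpose_mat (\<phi> x)"
    by blast
  have \<phi>c: "x \<in> carrier_mat 2 2 \<Longrightarrow> \<phi> x \<in> carrier_mat N N" for x using bij by (rule bij_betw_apply)
  have \<phi>inj: "x \<in> carrier_mat 2 2 \<Longrightarrow> y \<in> carrier_mat 2 2 \<Longrightarrow> \<phi> x = \<phi> y \<Longrightarrow> x = y" for x y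
    using bij unfolding bij_betw_def inj_on_def by blast
  have \<phi>surj: "Y \<in> carrier_mat N N \<Longrightarrow> \<exists>X\<in>carrier_mat 2 2. \<phi> X = Y" for Y
    using bij unfolding bij_betw_def by (metis imageE)
  have \<phi>add: "x \<in> carrier_mat 2 2 \<Longrightarrow> y \<in> carrier_mat 2 2 \<Longrightarrow> \<phi> (x + y) = \<phi> x + \<phi> y" for x y using hom by blast
  have \<phi>mult: "x \<in> carrier_mat 2 2 \<Longrightarrow> y \<in> carrier_mat 2 2 \<Longrightarrow> \<phi> (x * y) = \<phi> x * \<phi> y" for x y using hom by blast
  have \<phi>1: "\<phi> (1\<^sub>m 2) = 1\<^sub>m N"
  proof -
    obtain X where X: "X \<in> carrier_mat 2 2" and XI: "\<phi> X = 1\<^sub>m N" using \<phi>surj[of "1\<^sub>m N"] by auto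
    have "\<phi> X = \<phi> (1\<^sub>m 2 * X)" using X by simp
    also have "\<dots> = \<phi> (1\<^sub>m 2) * \<phi> X" by (rule \<phi>mult, insert X, auto)
    also have "\<dots> = \<phi> (1\<^sub>m 2)" using XI \<phi>c[of "1\<^sub>m 2"] by simp
    finally show ?thesis using XI by simp
  qed
  have \<phi>0: "\<phi> (0\<^sub>m 2 2) = 0\<^sub>m N N"
  proof -
    obtain X where X: "X \<in> carrier_mat 2 2" and XI: "\<phi> X = 0\<^sub>m N N" using \<phi>surj[of "0\<^sub>m N N"] by auto
    have "\<phi> (0\<^sub>m 2 2) = \<phi> (0\<^sub>m 2 2 * X)" using X by simp
    also have "\<dots> = \<phi> (0\<^sub>m 2 2) * \<phi> X" by (rule \<phi>mult, insert X, auto)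
    also have "\<dots> = 0\<^sub>m N N" using XI \<phi>c[of "0\<^sub>m 2 2"] by simp
    finally show ?thesis .
  qed
  from m2_f[OF ch moi] obtain v j where j: "j < 2" and vj: "v j = 1"
    and \<tau>f: "\<tau> (mat 2 2 (\<lambda>(k,l). if l = j then v k else 0)) = mat 2 2 (\<lambda>(k,l). if l = j then v k else 0)"
    by blast
  define f where "f = mat 2 2 (\<lambda>(k,l). if l = j then v k else (0::'f))"
  define u where "u = mat 2 2 (\<lambda>(k,l). v k * (if l = j then - v (1 - j) else (1::'f)))"
  define w where "w = mat 2 2 (\<lambda>(k,l). if k = 1 - j \<and> l = j then (1::'f) else 0)"
  note U2 = m2_units[of j v, OF j vj, folded f_def u_def w_def]
  have fc: "f \<in> carrier_mat 2 2" and uc: "u \<in> carrier_mat 2 2" and wc: "w \<in> carrier_mat 2 2" using U2 by auto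
  have \<tau>f': "\<tau> f = f" using \<tau>f unfolding f_def by simp
  define \<psi>0 where "\<psi>0 a = \<phi> (tens sm a f)" for a
  define P where "P = \<phi> (tens sm 1 f)"
  define U where "U = \<phi> (tens sm 1 u)"
  define W where "W = \<phi> (tens sm 1 w)"
  have Pc: "P \<in> carrier_mat N N" and Uc: "U \<in> carrier_mat N N" and Wc: "W \<in> carrier_mat N N"
    unfolding P_def U_def W_def by (auto intro: \<phi>c)
  have \<psi>0c: "\<psi>0 a \<in> carrier_mat N N" for a unfolding \<psi>0_def by (auto intro: \<phi>c)
  have \<psi>0_1: "\<psi>0 1 = P" unfolding \<psi>0_def P_def ..
  have tm: "\<phi> (tens sm a m) * \<phi> (tens sm b m') = \<phi> (tens sm (a * b) (m * m'))"
    if "m \<in> carrier_mat 2 2" "m' \<in> carrier_mat 2 2" for a b m m'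
    using \<phi>mult[of "tens sm a m" "tens sm b m'"] tens_mult[OF fa that] by simp
  have UW: "U * W = P" unfolding U_def W_def P_def using tm[OF uc wc] U2 by simp
  have WUP: "W * U + P = 1\<^sub>m N"
  proof -
    have "W * U + P = \<phi> (tens sm 1 (w * u)) + \<phi> (tens sm 1 f)" unfolding U_def W_def P_def using tm[OF wc uc] by simp
    also have "\<dots> = \<phi> (tens sm 1 (w * u) + tens sm 1 f)" by (rule \<phi>add[symmetric], auto)
    also have "tens sm 1 (w * u) + tens sm 1 f = tens sm 1 (w * u + f)"
      by (rule tens_add_right[OF fa, symmetric], insert wc uc fc, auto)
    finally show ?thesis using U2 tens_one[OF fa] \<phi>1 by simp
  qed
  have PW: "P * W = 0\<^sub>m N N" unfolding W_def P_def using tm[OF fc wc] U2 tens_zero[OF fa] \<phi>0 by simp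
  have UP: "U * P = 0\<^sub>m N N" unfolding U_def P_def using tm[OF uc fc] U2 tens_zero[OF fa] \<phi>0 by simp
  have PP: "P * P = P" unfolding P_def using tm[OF fc fc] U2 by simp
  have \<psi>0_add: "\<psi>0 (a + b) = \<psi>0 a + \<psi>0 b" for a b
    unfolding \<psi>0_def tens_add_left[OF fa] by (rule \<phi>add, auto)
  have \<psi>0_mult: "\<psi>0 (a * b) = \<psi>0 a * \<psi>0 b" for a b
    unfolding \<psi>0_def using tm[OF fc fc] U2 by simp
  have \<psi>0_sm: "\<psi>0 (sm c a) = c \<cdot>\<^sub>m \<psi>0 a" for c a
    unfolding \<psi>0_def using sc tens_smult[OF fa, of c a f] by (metis tens_carrier)
  have \<psi>0_sig: "\<psi>0 (\<sigma> a) = transpose_mat (\<psi>0 a)" for a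
    unfolding \<psi>0_def using iv tensinv[OF fa inv moi fc, of a] \<tau>f' by (metis tens_carrier)
  have \<psi>0_inj: "\<psi>0 a = \<psi>0 b \<Longrightarrow> a = b" for a b
  proof -
    assume "\<psi>0 a = \<psi>0 b"
    hence "tens sm a f = tens sm b f" unfolding \<psi>0_def by (rule \<phi>inj[rotated 2], auto)
    hence "tens sm a f $$ (j,j) = tens sm b f $$ (j,j)" by simp
    thus "a = b" using j vj FA(4)[OF fa] unfolding f_def by simp
  qed
  have PsymT: "transpose_mat P = P" using \<psi>0_sig[of 1] sig1 \<psi>0_1 by simp
  have \<psi>0_P: "P * \<psi>0 a = \<psi>0 a" "\<psi>0 a * P = \<psi>0 a" for a
    using \<psi>0_mult[of 1 a] \<psi>0_mult[of a 1] \<psi>0_1 by auto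
  have \<psi>0_img: "\<exists>a. \<psi>0 a = Y" if Y: "Y \<in> carrier_mat N N" and PYP: "P * Y * P = Y" for Y
  proof -
    obtain X where X: "X \<in> carrier_mat 2 2" and XY: "\<phi> X = Y" using \<phi>surj[OF Y] by auto
    have fX0: "tens sm 1 f * X \<in> carrier_mat 2 2" by (rule mult_carrier_mat[OF tens_carrier X])
    have fX: "tens sm 1 f * X * tens sm 1 f \<in> carrier_mat 2 2" by (rule mult_carrier_mat[OF fX0 tens_carrier])
    have "\<phi> (tens sm 1 f * X * tens sm 1 f) = P * Y * P"
      unfolding P_def XY[symmetric] using \<phi>mult[OF fX0 tens_carrier[of sm 1 f]] \<phi>mult[OF tens_carrier[of sm 1 f] X] by (simp only:)
    also have "\<dots> = \<phi> X" using PYP XY by simp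
    finally have "tens sm 1 f * X * tens sm 1 f = X" by (rule \<phi>inj[OF fX X])
    hence "X = tens sm (sm (v 0) (X $$ (j,0)) + sm (v 1) (X $$ (j,1))) f"
      using fXf[OF fa X j, of v] unfolding f_def by simp
    hence "\<psi>0 (sm (v 0) (X $$ (j,0)) + sm (v 1) (X $$ (j,1))) = Y" unfolding \<psi>0_def using XY by simp
    thus ?thesis by blast
  qed
  have si: "symidem N P"
    unfolding symidem_def
  proof (intro conjI allI impI, rule Pc)
    fix i j assume i: "i < N" and j: "j < N"
    show "P $$ (j,i) = P $$ (i,j)" using PsymT i j Pc by (metis carrier_matD index_transpose_mat(1))
    show "(\<Sum>m\<in>{0..<N}. P $$ (i,m) * P $$ (m,j)) = P $$ (i,j)"
      using mult_entry[OF Pc Pc i j] PP by simp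
  qed
  have gd: "good N P"
    unfolding good_def
  proof (rule disjI2, rule ccontr)
    assume "\<not> (\<exists>i<N. (\<Sum>j\<in>{0..<N}. P $$ (i,j)) \<noteq> 0)"
    hence rs: "\<And>i. i < N \<Longrightarrow> (\<Sum>j\<in>{0..<N}. P $$ (i,j)) = 0" by auto
    have PO: "P * ones N = 0\<^sub>m N 1"
    proof (rule eq_matI)
      fix i k assume i: "i < dim_row (0\<^sub>m N 1 :: 'f mat)" and k: "k < dim_col (0\<^sub>m N 1 :: 'f mat)"
      have "(P * ones N) $$ (i,k) = (\<Sum>m\<in>{0..<N}. P $$ (i,m) * ones N $$ (m,k))"
        by (rule mult_entry, insert Pc i k, auto simp: ones_def)
      also have "\<dots> = (\<Sum>m\<in>{0..<N}. P $$ (i,m))" using k by (auto intro!: sum.cong simp: ones_def)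
      finally show "(P * ones N) $$ (i,k) = 0\<^sub>m N 1 $$ (i,k)" using rs i k by simp
    qed (insert Pc, auto simp: ones_def)
    from alt_trick[OF ch Pc PsymT PP PO] obtain Y where Y: "Y \<in> carrier_mat N N"
      and PYP: "P * Y * P = Y" and YY: "Y + transpose_mat Y = P" by blast
    from \<psi>0_img[OF Y PYP] obtain a where a: "\<psi>0 a = Y" by blast
    have "\<psi>0 (a + \<sigma> a) = \<psi>0 1" using \<psi>0_add \<psi>0_sig a YY \<psi>0_1 by simp
    hence "a + \<sigma> a = 1" by (rule \<psi>0_inj)
    with orth show False by blast
  qed
  from orth_decomp[OF ch si gd] obtain r Q where on: "orthon N r Q"
    and QQe: "\<forall>i<N. \<forall>j<N. (\<Sum>a\<in>{0..<r}. Q $$ (i,a) * Q $$ (j,a)) = P $$ (i,j)" by blast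
  have Q: "Q \<in> carrier_mat N r" using on unfolding orthon_def by auto
  have QQ: "transpose_mat Q * Q = 1\<^sub>m r"
  proof (rule eq_matI)
    fix i k assume i: "i < dim_row (1\<^sub>m r :: 'f mat)" and k: "k < dim_col (1\<^sub>m r :: 'f mat)"
    have "(transpose_mat Q * Q) $$ (i,k) = (\<Sum>m\<in>{0..<N}. transpose_mat Q $$ (i,m) * Q $$ (m,k))"
      by (rule mult_entry, insert Q i k, auto)
    also have "\<dots> = (\<Sum>m\<in>{0..<N}. Q $$ (m,i) * Q $$ (m,k))" using Q i k by (auto intro!: sum.cong)
    finally show "(transpose_mat Q * Q) $$ (i,k) = 1\<^sub>m r $$ (i,k)" using on i k unfolding orthon_def by auto
  qed (insert Q, auto)
  have QQt: "Q * transpose_mat Q = P"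
  proof (rule eq_matI)
    fix i k assume i: "i < dim_row P" and k: "k < dim_col P"
    have "(Q * transpose_mat Q) $$ (i,k) = (\<Sum>m\<in>{0..<r}. Q $$ (i,m) * transpose_mat Q $$ (m,k))"
      by (rule mult_entry, insert Q Pc i k, auto)
    also have "\<dots> = (\<Sum>m\<in>{0..<r}. Q $$ (i,m) * Q $$ (k,m))" using Q Pc i k by (auto intro!: sum.cong)
    finally show "(Q * transpose_mat Q) $$ (i,k) = P $$ (i,k)" using QQe i k Pc by auto
  qed (insert Q Pc, auto)
  have Nr: "N = r + r" by (rule dim_eq2[OF Q Uc Wc Pc QQ QQt UW WUP PW UP])
  have rn: "r = 2^(n-1)"
  proof (cases n)
    case 0 thus ?thesis using Nr N_def by simp
  next
    case (Suc m) thus ?thesis using Nr N_def by simp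
  qed
  define \<psi> where "\<psi> a = transpose_mat Q * \<psi>0 a * Q" for a
  note QF = Q Pc QQ QQt
  show ?thesis
    unfolding alg_inv_iso_def rn[symmetric]
  proof (intro exI[of _ \<psi>] conjI ballI allI)
    show "bij_betw \<psi> UNIV (carrier_mat r r)"
      unfolding bij_betw_def
    proof
      show "inj_on \<psi> UNIV"
      proof (rule inj_onI)
        fix a b assume "\<psi> a = \<psi> b"
        hence "Q * \<psi> a * transpose_mat Q = Q * \<psi> b * transpose_mat Q" by simp
        hence "\<psi>0 a = \<psi>0 b" unfolding \<psi>_def using uncut[OF QF \<psi>0c \<psi>0_P(1) \<psi>0_P(2)] by simp
        thus "a = b" by (rule \<psi>0_inj)
      qed
      show "range \<psi> = carrier_mat r r"
      proof
        show "range \<psi> \<subseteq> carrier_mat r r" unfolding \<psi>_def using cut_c[OF QF \<psi>0c] by auto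
        show "carrier_mat r r \<subseteq> range \<psi>"
        proof
          fix Z :: "'f mat" assume Z: "Z \<in> carrier_mat r r"
          have Yc: "Q * Z * transpose_mat Q \<in> carrier_mat N N" using Q Z by simp
          from \<psi>0_img[OF Yc uncut_fix[OF QF Z]] obtain a where "\<psi>0 a = Q * Z * transpose_mat Q" by blast
          hence "\<psi> a = Z" unfolding \<psi>_def using cut_uncut[OF QF Z] by simp
          thus "Z \<in> range \<psi>" by (metis rangeI)
        qed
      qed
    qed
    fix a b :: 'a and c :: 'f
    show "\<psi> (a + b) = \<psi> a + \<psi> b" unfolding \<psi>_def \<psi>0_add by (rule cut_add[OF QF \<psi>0c \<psi>0c])
    show "\<psi> (a * b) = \<psi> a * \<psi> b" unfolding \<psi>_def \<psi>0_mult by (rule cut_mult[OF QF \<psi>0c \<psi>0c \<psi>0_P(2)])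
    show "\<psi> (sm c a) = c \<cdot>\<^sub>m \<psi> a" unfolding \<psi>_def \<psi>0_sm by (rule cut_smult[OF QF \<psi>0c])
    show "\<psi> (\<sigma> a) = transpose_mat (\<psi> a)" unfolding \<psi>_def \<psi>0_sig by (rule cut_transpose[OF QF \<psi>0c])
  qed
qed


end
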